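(* Let $\sigma\in\{1,-1\}$, $U$ an open subset of the Weyl upper half-plane, and let $M_c(\rho,v)$ be a $2\times2$ diagonal invertible matrix function of class $C^2$ on $U$ satisfying $d(\rho\star M_c^{-1}dM_c)=0$. Let $\varphi:U\to\mathbb{C}$ be a $C^\infty$ function of the form $\frac{-\sigma(\omega-v)\pm\sqrt{(\omega-v)^2+\sigma\rho^2}}{\rho}$ (fixed $\omega\in\mathbb C$, continuous branch) with $\varphi\neq0$ and $\varphi^2+\sigma\ne0$ on $U$. Then for all $\alpha\in\mathbb{R}$, $\beta\in\mathbb{Z}$, $K\in\mathbb{R}\setminus\{0\}$, the matrix $$M=M_c\begin{bmatrix}K\rho^\alpha\varphi^\beta&0\\0&K^{-1}\rho^{-\alpha}\varphi^{-\beta}\end{bmatrix}$$ also satisfies $d(\rho\star M^{-1}dM)=0$ on $U$.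
   Context: The Weyl upper half-plane is $\{(\rho,v)\in\mathbb{R}^2:\rho>0\}$. The Hodge star acts on one-forms in $(\rho,v)$ by $\star d\rho=-\sigma\,dv$, $\star dv=d\rho$. *)

theory Defs
  imports "HOL-Analysis.Analysis"
begin

definition pd_rho :: "(real \<times> real \<Rightarrow> 'a::real_normed_vector) \<Rightarrow> real \<times> real \<Rightarrow> 'a" where
  "pd_rho f p = vector_derivative (\<lambda>t. f (t, snd p)) (at (fst p))"

definition pd_v :: "(real \<times> real \<Rightarrow> 'a::real_normed_vector) \<Rightarrow> real \<times> real \<Rightarrow> 'a" where
  "pd_v f p = vector_derivative (\<lambda>t. f (fst p, t)) (at (snd p))"

fun Ck_on :: "nat \<Rightarrow> (real \<times> real) set \<Rightarrow> (real \<times> real \<Rightarrow> 'a::real_normed_vector) \<Rightarrow> bool" where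
  "Ck_on 0 U f = continuous_on U f"
| "Ck_on (Suc k) U f =
     (continuous_on U f \<and>
      (\<forall>p\<in>U. (\<lambda>t. f (t, snd p)) differentiable (at (fst p)) \<and>
              (\<lambda>t. f (fst p, t)) differentiable (at (snd p))) \<and>
      Ck_on k U (pd_rho f) \<and> Ck_on k U (pd_v f))"

definition smooth_on :: "(real \<times> real) set \<Rightarrow> (real \<times> real \<Rightarrow> 'a::real_normed_vector) \<Rightarrow> bool" where
  "smooth_on U f = (\<forall>k. Ck_on k U f)"

definition weyl_half_plane :: "(real \<times> real) set" where
  "weyl_half_plane = {p. fst p > 0}"

text \<open>A one-form  a d\<rho> + b dv  is represented by its coefficient pair (a, b).\<close>

type_synonym 'a oneform = "(real \<times> real \<Rightarrow> 'a) \<times> (real \<times> real \<Rightarrow> 'a)"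

text \<open>Hodge star: star d\<rho> = -sigma dv, star dv = d\<rho>.\<close>
definition hodge :: "real \<Rightarrow> 'a::real_normed_vector oneform \<Rightarrow> 'a oneform" where
  "hodge \<sigma> w = ((\<lambda>p. snd w p), (\<lambda>p. - (\<sigma> *\<^sub>R fst w p)))"

text \<open>Exterior derivative of a one-form: coefficient of d\<rho> wedge dv.\<close>
definition ext_d :: "'a::real_normed_vector oneform \<Rightarrow> real \<times> real \<Rightarrow> 'a" where
  "ext_d w p = pd_rho (snd w) p - pd_v (fst w) p"

definition scale_form :: "(real \<times> real \<Rightarrow> real) \<Rightarrow> 'a::real_normed_vector oneform \<Rightarrow> 'a oneform" where
  "scale_form g w = ((\<lambda>p. g p *\<^sub>R fst w p), (\<lambda>p. g p *\<^sub>R snd w p))"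

definition log_diff :: "(real \<times> real \<Rightarrow> complex^2^2) \<Rightarrow> (complex^2^2) oneform" where
  "log_diff M = ((\<lambda>p. matrix_inv (M p) ** pd_rho M p), (\<lambda>p. matrix_inv (M p) ** pd_v M p))"

definition weyl_eq :: "real \<Rightarrow> (real \<times> real) set \<Rightarrow> (real \<times> real \<Rightarrow> complex^2^2) \<Rightarrow> bool" where
  "weyl_eq \<sigma> U M = (\<forall>p\<in>U. ext_d (scale_form fst (hodge \<sigma> (log_diff M))) p = 0)"

definition diag2 :: "complex \<Rightarrow> complex \<Rightarrow> complex^2^2" where
  "diag2 a b = (\<chi> i j. if i = j then (if i = 1 then a else b) else 0)"

end

theory Submission
  imports Defs
begin



lemma diag2_nth: "diag2 a b $ i $ j = (if i = j then (if i = 1 then a else b) else 0)"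
  by (simp add: diag2_def)

lemma two_ne: "(1::2) \<noteq> 2" by simp

lemma diag2_eq_iff: "diag2 a b = diag2 c d \<longleftrightarrow> a = c \<and> b = d"
  by (auto simp: vec_eq_iff diag2_def forall_2)

lemma diag2_zero_iff: "diag2 a b = 0 \<longleftrightarrow> a = 0 \<and> b = 0"
  by (auto simp: vec_eq_iff diag2_def forall_2)

lemma diag2_mult: "diag2 a b ** diag2 c d = diag2 (a*c) (b*d)"
  by (auto simp: vec_eq_iff diag2_def forall_2 matrix_matrix_mult_def sum_2)

lemma diag2_one: "mat 1 = diag2 1 1"
  by (auto simp: vec_eq_iff diag2_def forall_2 mat_def)

lemma diag2_add: "diag2 a b + diag2 c d = diag2 (a+c) (b+d)"
  by (auto simp: vec_eq_iff diag2_def forall_2)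
lemma diag2_diff: "diag2 a b - diag2 c d = diag2 (a-c) (b-d)"
  by (auto simp: vec_eq_iff diag2_def forall_2)
lemma diag2_uminus: "- diag2 a b = diag2 (-a) (-b)"
  by (auto simp: vec_eq_iff diag2_def forall_2)
lemma diag2_scaleR: "r *\<^sub>R diag2 a b = diag2 (of_real r * a) (of_real r * b)"
  apply (simp add: vec_eq_iff diag2_def forall_2 vector_scaleR_component)
  by (simp add: scaleR_conv_of_real)

lemma matrix_inv_diag2:
  assumes "a \<noteq> 0" "b \<noteq> 0"
  shows "matrix_inv (diag2 a b) = diag2 (inverse a) (inverse b)"
proof -
  let ?A = "diag2 a b" and ?B = "diag2 (inverse a) (inverse b)"
  have AB: "?A ** ?B = mat 1" "?B ** ?A = mat 1"
    using assms by (simp_all add: diag2_mult diag2_one)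
  show ?thesis unfolding matrix_inv_def
  proof (rule someI2[where a = ?B])
    show "?A ** ?B = mat 1 \<and> ?B ** ?A = mat 1" using AB by simp
  next
    fix X assume X: "?A ** X = mat 1 \<and> X ** ?A = mat 1"
    have "X = X ** (?A ** ?B)" using AB by simp
    also have "\<dots> = (X ** ?A) ** ?B" by (simp add: matrix_mul_assoc)
    also have "\<dots> = ?B" using X by simp
    finally show "X = ?B" .
  qed
qed

lemma bl_diag2_1: "bounded_linear (\<lambda>a. diag2 a 0)"
  unfolding linear_conv_bounded_linear[symmetric]
  by (rule linearI) (auto simp: vec_eq_iff diag2_def forall_2 vector_scaleR_component)
lemma bl_diag2_2: "bounded_linear (\<lambda>a. diag2 0 a)"
  unfolding linear_conv_bounded_linear[symmetric]
  by (rule linearI) (auto simp: vec_eq_iff diag2_def forall_2 vector_scaleR_component)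

lemma hvd_diag2:
  assumes "(f has_vector_derivative f') F" "(g has_vector_derivative g') F"
  shows "((\<lambda>t. diag2 (f t) (g t)) has_vector_derivative diag2 f' g') F"
proof -
  have "((\<lambda>t. diag2 (f t) 0 + diag2 0 (g t)) has_vector_derivative (diag2 f' 0 + diag2 0 g')) F"
    by (intro has_vector_derivative_add bounded_linear.has_vector_derivative[OF bl_diag2_1]
        bounded_linear.has_vector_derivative[OF bl_diag2_2] assms)
  then show ?thesis by (simp add: diag2_add)
qed

lemma bl_entry: "bounded_linear (\<lambda>x::'a::real_normed_vector^'n^'m. x $ i $ j)"
  using bounded_linear_compose[OF bounded_linear_vec_nth[of j] bounded_linear_vec_nth[of i]] by (simp add: o_def)

lemma hvd_entry:
  assumes "(f has_vector_derivative f') F"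
  shows "((\<lambda>t. f t $ i $ j) has_vector_derivative f' $ i $ j) F"
  by (rule bounded_linear.has_vector_derivative[OF bl_entry assms])




lemma pdr_eq: "((\<lambda>t. f (t, snd p)) has_vector_derivative D) (at (fst p)) \<Longrightarrow> pd_rho f p = D"
  unfolding pd_rho_def by (rule vector_derivative_at)
lemma pdv_eq: "((\<lambda>t. f (fst p, t)) has_vector_derivative D) (at (snd p)) \<Longrightarrow> pd_v f p = D"
  unfolding pd_v_def by (rule vector_derivative_at)
lemma pdr_works: "(\<lambda>t. f (t, snd p)) differentiable (at (fst p)) \<Longrightarrow>
   ((\<lambda>t. f (t, snd p)) has_vector_derivative pd_rho f p) (at (fst p))"
  unfolding pd_rho_def by (simp add: vector_derivative_works[symmetric])
lemma pdv_works: "(\<lambda>t. f (fst p, t)) differentiable (at (snd p)) \<Longrightarrow>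
   ((\<lambda>t. f (fst p, t)) has_vector_derivative pd_v f p) (at (snd p))"
  unfolding pd_v_def by (simp add: vector_derivative_works[symmetric])

lemma open_line_r: "open (U::(real\<times>real) set) \<Longrightarrow> open {t. (t, c) \<in> U}"
proof -
  assume "open U"
  moreover have "\<And>x. continuous (at x) (\<lambda>t::real. (t, c))" by (intro continuous_intros)
  ultimately have "open ((\<lambda>t. (t, c)) -` U)" using continuous_open_vimage[of U "\<lambda>t. (t, c)"] by blast
  then show ?thesis by (simp add: vimage_def)
qed
lemma open_line_v: "open (U::(real\<times>real) set) \<Longrightarrow> open {t. (c, t) \<in> U}"
proof -
  assume "open U"
  moreover have "\<And>x. continuous (at x) (\<lambda>t::real. (c, t))" by (intro continuous_intros)
  ultimately have "open ((\<lambda>t. (c, t)) -` U)" using continuous_open_vimage[of U "\<lambda>t. (c, t)"] by blast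
  then show ?thesis by (simp add: vimage_def)
qed

lemma transfer_r:
  fixes U :: "(real\<times>real) set"
  assumes "open U" "p \<in> U" "\<forall>q\<in>U. f q = g q"
    "((\<lambda>t. f (t, snd p)) has_vector_derivative D) (at (fst p))"
  shows "((\<lambda>t. g (t, snd p)) has_vector_derivative D) (at (fst p))"
  apply (rule has_vector_derivative_transform_within_open[OF assms(4) open_line_r[OF assms(1)]])
  using assms by auto
lemma transfer_v:
  fixes U :: "(real\<times>real) set"
  assumes "open U" "p \<in> U" "\<forall>q\<in>U. f q = g q"
    "((\<lambda>t. f (fst p, t)) has_vector_derivative D) (at (snd p))"
  shows "((\<lambda>t. g (fst p, t)) has_vector_derivative D) (at (snd p))"
  apply (rule has_vector_derivative_transform_within_open[OF assms(4) open_line_v[OF assms(1)]])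
  using assms by auto

definition Rn :: "(real \<times> real \<Rightarrow> complex) \<Rightarrow> real \<times> real \<Rightarrow> complex" where
  "Rn n q = of_real (fst q) * (pd_rho n q / n q)"
definition Vn :: "(real \<times> real \<Rightarrow> complex) \<Rightarrow> real \<times> real \<Rightarrow> complex" where
  "Vn n q = of_real (fst q) * (pd_v n q / n q)"

lemma diag_weyl:
  assumes U: "open U" and p: "p \<in> U"
    and N: "\<forall>q\<in>U. N q = diag2 (n1 q) (n2 q)"
    and nz: "\<forall>q\<in>U. n1 q \<noteq> 0 \<and> n2 q \<noteq> 0"
    and d1: "\<forall>q\<in>U. ((\<lambda>t. n1 (t, snd q)) differentiable (at (fst q))) \<and> ((\<lambda>t. n1 (fst q, t)) differentiable (at (snd q)))"
    and d2: "\<forall>q\<in>U. ((\<lambda>t. n2 (t, snd q)) differentiable (at (fst q))) \<and> ((\<lambda>t. n2 (fst q, t)) differentiable (at (snd q)))"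
    and R1: "((\<lambda>t. Rn n1 (t, snd p)) has_vector_derivative DR1) (at (fst p))"
    and R2: "((\<lambda>t. Rn n2 (t, snd p)) has_vector_derivative DR2) (at (fst p))"
    and V1: "((\<lambda>t. Vn n1 (fst p, t)) has_vector_derivative DV1) (at (snd p))"
    and V2: "((\<lambda>t. Vn n2 (fst p, t)) has_vector_derivative DV2) (at (snd p))"
  shows "ext_d (scale_form fst (hodge \<sigma> (log_diff N))) p =
     diag2 (- (of_real \<sigma> * DR1) - DV1) (- (of_real \<sigma> * DR2) - DV2)"
proof -
  have pr: "pd_rho N q = diag2 (pd_rho n1 q) (pd_rho n2 q)" if q: "q \<in> U" for q
  proof (rule pdr_eq)
    show "((\<lambda>t. N (t, snd q)) has_vector_derivative diag2 (pd_rho n1 q) (pd_rho n2 q)) (at (fst q))"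
      apply (rule transfer_r[OF U q, of "\<lambda>q. diag2 (n1 q) (n2 q)"])
      using N apply simp
      apply (rule hvd_diag2)
      using d1 d2 q by (auto intro: pdr_works)
  qed
  have pv: "pd_v N q = diag2 (pd_v n1 q) (pd_v n2 q)" if q: "q \<in> U" for q
  proof (rule pdv_eq)
    show "((\<lambda>t. N (fst q, t)) has_vector_derivative diag2 (pd_v n1 q) (pd_v n2 q)) (at (snd q))"
      apply (rule transfer_v[OF U q, of "\<lambda>q. diag2 (n1 q) (n2 q)"])
      using N apply simp
      apply (rule hvd_diag2)
      using d1 d2 q by (auto intro: pdv_works)
  qed
  have F1: "\<forall>q\<in>U. diag2 (Vn n1 q) (Vn n2 q) = fst (scale_form fst (hodge \<sigma> (log_diff N))) q"
    using N nz pr pv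
    by (auto simp: scale_form_def hodge_def log_diff_def matrix_inv_diag2 diag2_mult diag2_scaleR
        Vn_def divide_inverse mult.commute)
  have F2: "\<forall>q\<in>U. diag2 (- (of_real \<sigma> * Rn n1 q)) (- (of_real \<sigma> * Rn n2 q)) = snd (scale_form fst (hodge \<sigma> (log_diff N))) q"
    using N nz pr pv
    by (auto simp: scale_form_def hodge_def log_diff_def matrix_inv_diag2 diag2_mult diag2_scaleR
        diag2_uminus Rn_def divide_inverse mult.commute mult.left_commute)
  have a: "pd_rho (snd (scale_form fst (hodge \<sigma> (log_diff N)))) p = diag2 (- (of_real \<sigma> * DR1)) (- (of_real \<sigma> * DR2))"
    apply (rule pdr_eq)
    apply (rule transfer_r[OF U p F2])
    by (intro hvd_diag2 derivative_intros R1 R2)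
  have b: "pd_v (fst (scale_form fst (hodge \<sigma> (log_diff N)))) p = diag2 DV1 DV2"
    apply (rule pdv_eq)
    apply (rule transfer_v[OF U p F1])
    by (intro hvd_diag2 V1 V2)
  show ?thesis unfolding ext_d_def a b diag2_diff ..
qed




lemma hvd_chain:
  assumes "(f has_vector_derivative f') (at x)" "(g has_field_derivative g') (at (f x))"
  shows "((\<lambda>t. g (f t)) has_vector_derivative (f' * g')) (at x)"
  using field_vector_diff_chain_at[OF assms] by (simp add: o_def)

lemma sigma_sq: "(\<sigma>::real) \<in> {1, -1} \<Longrightarrow> (complex_of_real \<sigma>)^2 = 1"
  by auto

lemma phi_E:
  fixes t \<sigma> :: real and f w :: complex
  assumes s: "\<sigma> \<in> {1,-1}" and t: "t \<noteq> 0"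
    and eq: "(of_real t * f + of_real \<sigma> * w)\<^sup>2 = w\<^sup>2 + of_real \<sigma> * (of_real t)\<^sup>2"
  shows "of_real t * f * f + 2 * of_real \<sigma> * w * f - of_real \<sigma> * of_real t = 0"
proof -
  have s2: "(complex_of_real \<sigma>)^2 = 1" using s by auto
  have "of_real t * (of_real t * f * f + 2 * of_real \<sigma> * w * f - of_real \<sigma> * of_real t)
     = (of_real t * f + of_real \<sigma> * w)\<^sup>2 - (w\<^sup>2 + of_real \<sigma> * (of_real t)\<^sup>2) + (1 - (of_real \<sigma>)^2) * w^2"
    by (simp add: algebra_simps power2_eq_square)
  also have "\<dots> = 0" using eq s2 by simp
  finally show ?thesis using t by simp
qed

lemma phi_derivs:
  fixes \<sigma> :: real and U :: "(real \<times> real) set" and \<phi> :: "real \<times> real \<Rightarrow> complex" and \<omega> :: complex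
  assumes sigma: "\<sigma> \<in> {1, -1}"
    and U_open: "open U" and U_sub: "U \<subseteq> weyl_half_plane"
    and phi_form: "\<forall>p\<in>U. (complex_of_real (fst p) * \<phi> p + complex_of_real \<sigma> * (\<omega> - complex_of_real (snd p)))\<^sup>2
                          = (\<omega> - complex_of_real (snd p))\<^sup>2 + complex_of_real \<sigma> * (complex_of_real (fst p))\<^sup>2"
    and phi_nz: "\<forall>p\<in>U. \<phi> p \<noteq> 0"
    and phi_sq: "\<forall>p\<in>U. (\<phi> p)\<^sup>2 + complex_of_real \<sigma> \<noteq> 0"
    and dr: "\<forall>p\<in>U. (\<lambda>t. \<phi> (t, snd p)) differentiable (at (fst p))"
    and dv: "\<forall>p\<in>U. (\<lambda>t. \<phi> (fst p, t)) differentiable (at (snd p))"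
    and q: "q \<in> U"
  shows "((\<lambda>t. \<phi> (t, snd q)) has_vector_derivative
           \<phi> q * (of_real \<sigma> - \<phi> q ^ 2) / (of_real (fst q) * (\<phi> q ^ 2 + of_real \<sigma>))) (at (fst q))"
    and "((\<lambda>t. \<phi> (fst q, t)) has_vector_derivative
           2 * of_real \<sigma> * \<phi> q ^ 2 / (of_real (fst q) * (\<phi> q ^ 2 + of_real \<sigma>))) (at (snd q))"
proof -
  obtain t v where qtv: "q = (t, v)" by fastforce
  have tpos: "t > 0" using q U_sub qtv by (auto simp: weyl_half_plane_def)
  have E: "\<And>a b. (a, b) \<in> U \<Longrightarrow> of_real a * \<phi> (a,b) * \<phi> (a,b) + 2 * of_real \<sigma> * (\<omega> - of_real b) * \<phi> (a,b)
      - of_real \<sigma> * of_real a = 0"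
  proof -
    fix a b assume ab: "(a, b) \<in> U"
    then have "a > 0" using U_sub by (auto simp: weyl_half_plane_def)
    then show "?thesis a b" using phi_E[OF sigma, of a "\<phi> (a,b)" "\<omega> - of_real b"] phi_form ab by auto
  qed
  let ?f = "\<phi> q" and ?x = "complex_of_real t" and ?s = "complex_of_real \<sigma>" and ?w = "\<omega> - complex_of_real v"
  have Eq: "?x * ?f * ?f + 2 * ?s * ?w * ?f - ?s * ?x = 0" using E q qtv by simp
  have fnz: "?f \<noteq> 0" using phi_nz q by simp
  have sqnz: "?f^2 + ?s \<noteq> 0" using phi_sq q by simp
  have xnz: "?x \<noteq> 0" using tpos by simp
  define D where "D = pd_rho \<phi> q"
  have hx: "\<And>t. ((\<lambda>x. complex_of_real x) has_vector_derivative 1) (at t)"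
    using has_vector_derivative_of_real[OF DERIV_ident] by simp
  have hD: "((\<lambda>t'. \<phi> (t', v)) has_vector_derivative D) (at t)"
    using pdr_works[of \<phi> q] dr[rule_format, OF q] qtv D_def by simp
  have G1: "((\<lambda>t'. of_real t' * \<phi> (t', v) * \<phi> (t', v) + 2 * ?s * ?w * \<phi> (t', v) - ?s * of_real t')
     has_vector_derivative (?x * ?f * D + (?x * D + 1 * ?f) * ?f + 2 * ?s * ?w * D - ?s * 1)) (at t)"
    using qtv by (auto intro!: derivative_eq_intros hD hx)
  have G0: "((\<lambda>t'. of_real t' * \<phi> (t', v) * \<phi> (t', v) + 2 * ?s * ?w * \<phi> (t', v) - ?s * of_real t')
     has_vector_derivative 0) (at t)"
    apply (rule has_vector_derivative_transform_within_open[OF has_vector_derivative_const open_line_r[OF U_open, of v]])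
    using q qtv E by auto
  have eqD: "?x * ?f * D + (?x * D + 1 * ?f) * ?f + 2 * ?s * ?w * D - ?s * 1 = 0"
    using vector_derivative_unique_at[OF G1 G0] .
  have "D * (?x * (?f^2 + ?s)) = ?f * (?x * ?f * D + (?x * D + 1 * ?f) * ?f + 2 * ?s * ?w * D - ?s * 1)
      - D * (?x * ?f * ?f + 2 * ?s * ?w * ?f - ?s * ?x) + ?f * (?s - ?f^2)"
    by (simp add: algebra_simps power2_eq_square)
  also have "\<dots> = ?f * (?s - ?f^2)" using eqD Eq by simp
  finally have "D = ?f * (?s - ?f^2) / (?x * (?f^2 + ?s))"
    using xnz sqnz by (simp add: eq_divide_eq)
  then show "((\<lambda>t. \<phi> (t, snd q)) has_vector_derivative
           \<phi> q * (of_real \<sigma> - \<phi> q ^ 2) / (of_real (fst q) * (\<phi> q ^ 2 + of_real \<sigma>))) (at (fst q))"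
    using hD qtv by simp
next
  obtain t v where qtv: "q = (t, v)" by fastforce
  have tpos: "t > 0" using q U_sub qtv by (auto simp: weyl_half_plane_def)
  have E: "\<And>a b. (a, b) \<in> U \<Longrightarrow> of_real a * \<phi> (a,b) * \<phi> (a,b) + 2 * of_real \<sigma> * (\<omega> - of_real b) * \<phi> (a,b)
      - of_real \<sigma> * of_real a = 0"
  proof -
    fix a b assume ab: "(a, b) \<in> U"
    then have "a > 0" using U_sub by (auto simp: weyl_half_plane_def)
    then show "?thesis a b" using phi_E[OF sigma, of a "\<phi> (a,b)" "\<omega> - of_real b"] phi_form ab by auto
  qed
  let ?f = "\<phi> q" and ?x = "complex_of_real t" and ?s = "complex_of_real \<sigma>" and ?w = "\<omega> - complex_of_real v"
  have Eq: "?x * ?f * ?f + 2 * ?s * ?w * ?f - ?s * ?x = 0" using E q qtv by simp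
  have sqnz: "?f^2 + ?s \<noteq> 0" using phi_sq q by simp
  have xnz: "?x \<noteq> 0" using tpos by simp
  define D where "D = pd_v \<phi> q"
  have hx: "\<And>t. ((\<lambda>x. complex_of_real x) has_vector_derivative 1) (at t)"
    using has_vector_derivative_of_real[OF DERIV_ident] by simp
  have hD: "((\<lambda>v'. \<phi> (t, v')) has_vector_derivative D) (at v)"
    using pdv_works[of \<phi> q] dv[rule_format, OF q] qtv D_def by simp
  have G1: "((\<lambda>v'. ?x * \<phi> (t, v') * \<phi> (t, v') + 2 * ?s * (\<omega> - of_real v') * \<phi> (t, v') - ?s * ?x)
     has_vector_derivative (?x * ?f * D + (?x * D) * ?f + (2 * ?s * ?w * D + (2 * ?s * (0 - 1)) * ?f) - 0)) (at v)"
    using qtv by (auto intro!: derivative_eq_intros hD hx)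
  have G0: "((\<lambda>v'. ?x * \<phi> (t, v') * \<phi> (t, v') + 2 * ?s * (\<omega> - of_real v') * \<phi> (t, v') - ?s * ?x)
     has_vector_derivative 0) (at v)"
    apply (rule has_vector_derivative_transform_within_open[OF has_vector_derivative_const open_line_v[OF U_open, of t]])
    using q qtv E by auto
  have eqD: "?x * ?f * D + (?x * D) * ?f + (2 * ?s * ?w * D + (2 * ?s * (0 - 1)) * ?f) - 0 = 0"
    using vector_derivative_unique_at[OF G1 G0] .
  have "D * (?x * (?f^2 + ?s)) = ?f * (?x * ?f * D + (?x * D) * ?f + (2 * ?s * ?w * D + (2 * ?s * (0 - 1)) * ?f) - 0)
      - D * (?x * ?f * ?f + 2 * ?s * ?w * ?f - ?s * ?x) + 2 * ?s * ?f^2"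
    by (simp add: algebra_simps power2_eq_square)
  also have "\<dots> = 2 * ?s * ?f^2" using eqD Eq by simp
  finally have "D = 2 * ?s * ?f^2 / (?x * (?f^2 + ?s))"
    using xnz sqnz by (simp add: eq_divide_eq)
  then show "((\<lambda>t. \<phi> (fst q, t)) has_vector_derivative
           2 * of_real \<sigma> * \<phi> q ^ 2 / (of_real (fst q) * (\<phi> q ^ 2 + of_real \<sigma>))) (at (snd q))"
    using hD qtv by simp
qed




lemma g_deriv:
  fixes s z :: complex and al be :: complex
  assumes nz: "z*z + s \<noteq> 0"
  shows "((\<lambda>z. al + be * ((s - z*z) / (z*z + s))) has_field_derivative be * (- (4 * s * z)) / ((z*z + s)*(z*z+s))) (at z)"
proof -
  have d1: "((\<lambda>z. s - z*z) has_field_derivative -(2*z)) (at z)" by (auto intro!: derivative_eq_intros)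
  have d2: "((\<lambda>z. z*z + s) has_field_derivative (2*z)) (at z)" by (auto intro!: derivative_eq_intros)
  have "((\<lambda>z. al + be * ((s - z*z) / (z*z + s))) has_field_derivative
       0 + be * ((-(2*z) * (z*z+s) - (s - z*z) * (2*z)) / ((z*z+s)*(z*z+s)))) (at z)"
    by (intro DERIV_add DERIV_const DERIV_cmult DERIV_divide[OF d1 d2 nz])
  then show ?thesis by (rule DERIV_cong) (simp add: algebra_simps)
qed

lemma h_deriv:
  fixes s z :: complex and be :: complex
  assumes nz: "z*z + s \<noteq> 0"
  shows "((\<lambda>z. be * ((2 * s * z) / (z*z + s))) has_field_derivative be * (2 * s * (s - z*z)) / ((z*z + s)*(z*z+s))) (at z)"
proof -
  have d1: "((\<lambda>z. 2 * s * z) has_field_derivative 2 * s) (at z)" by (auto intro!: derivative_eq_intros)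
  have d2: "((\<lambda>z. z*z + s) has_field_derivative (2*z)) (at z)" by (auto intro!: derivative_eq_intros)
  have "((\<lambda>z. be * ((2 * s * z) / (z*z + s))) has_field_derivative
       be * ((2 * s * (z*z+s) - (2 * s * z) * (2*z)) / ((z*z+s)*(z*z+s)))) (at z)"
    by (intro DERIV_cmult DERIV_divide[OF d1 d2 nz])
  then show ?thesis by (rule DERIV_cong) (simp add: algebra_simps)
qed




lemma alg1: fixes x f s :: complex assumes "x \<noteq> 0" "f \<noteq> 0" "f*f+s \<noteq> 0"
  shows "x * (f * (s - f^2) / (x * (f^2 + s)) / f) = (s - f*f)/(f*f+s)"
  using assms by (simp add: power2_eq_square)
lemma alg2: fixes x f s :: complex assumes "x \<noteq> 0" "f \<noteq> 0" "f*f+s \<noteq> 0"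
  shows "x * (2 * s * f^2 / (x * (f^2 + s)) / f) = (2 * s * f)/(f*f+s)"
  using assms by (simp add: power2_eq_square)

locale phiU =
  fixes \<sigma> :: real and U :: "(real \<times> real) set" and \<phi> :: "real \<times> real \<Rightarrow> complex" and \<omega> :: complex
  assumes sigma: "\<sigma> \<in> {1, -1}"
    and U_open: "open U" and U_sub: "U \<subseteq> weyl_half_plane"
    and phi_form: "\<forall>p\<in>U. (complex_of_real (fst p) * \<phi> p + complex_of_real \<sigma> * (\<omega> - complex_of_real (snd p)))\<^sup>2
                          = (\<omega> - complex_of_real (snd p))\<^sup>2 + complex_of_real \<sigma> * (complex_of_real (fst p))\<^sup>2"
    and phi_nz: "\<forall>p\<in>U. \<phi> p \<noteq> 0"
    and phi_sq: "\<forall>p\<in>U. (\<phi> p)\<^sup>2 + complex_of_real \<sigma> \<noteq> 0"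
    and dr: "\<forall>p\<in>U. (\<lambda>t. \<phi> (t, snd p)) differentiable (at (fst p))"
    and dv: "\<forall>p\<in>U. (\<lambda>t. \<phi> (fst p, t)) differentiable (at (snd p))"
begin

lemma powi_deriv: "(z::complex) \<noteq> 0 \<Longrightarrow> ((\<lambda>z. z powi n) has_field_derivative of_int n * z powi (n - 1)) (at z)"
  by (rule DERIV_cong[OF DERIV_power_int[OF DERIV_ident]]) auto

definition "Pr q = \<phi> q * (of_real \<sigma> - \<phi> q ^ 2) / (of_real (fst q) * (\<phi> q ^ 2 + of_real \<sigma>))"
definition "Pv q = 2 * of_real \<sigma> * \<phi> q ^ 2 / (of_real (fst q) * (\<phi> q ^ 2 + of_real \<sigma>))"

lemma phi_r: "q \<in> U \<Longrightarrow> ((\<lambda>t. \<phi> (t, snd q)) has_vector_derivative Pr q) (at (fst q))"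
  unfolding Pr_def by (rule phi_derivs(1)[OF sigma U_open U_sub phi_form phi_nz phi_sq dr dv])
lemma phi_v: "q \<in> U \<Longrightarrow> ((\<lambda>t. \<phi> (fst q, t)) has_vector_derivative Pv q) (at (snd q))"
  unfolding Pv_def by (rule phi_derivs(2)[OF sigma U_open U_sub phi_form phi_nz phi_sq dr dv])

lemma fst_pos: "q \<in> U \<Longrightarrow> fst q > 0" using U_sub by (auto simp: weyl_half_plane_def)

lemma a_part:
  fixes c \<alpha> :: real and \<beta> :: int
  assumes c: "c \<noteq> 0"
  defines "a \<equiv> \<lambda>q. complex_of_real (c * fst q powr \<alpha>) * \<phi> q powi \<beta>"
  shows "\<forall>q\<in>U. a q \<noteq> 0"
    and "\<forall>q\<in>U. (\<lambda>t. a (t, snd q)) differentiable (at (fst q)) \<and> (\<lambda>t. a (fst q, t)) differentiable (at (snd q))"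
    and "\<forall>q\<in>U. Rn a q = of_real \<alpha> + of_int \<beta> * ((of_real \<sigma> - \<phi> q * \<phi> q) / (\<phi> q * \<phi> q + of_real \<sigma>))"
    and "\<forall>q\<in>U. Vn a q = of_int \<beta> * ((2 * of_real \<sigma> * \<phi> q) / (\<phi> q * \<phi> q + of_real \<sigma>))"
proof -
  show "\<forall>q\<in>U. a q \<noteq> 0"
  proof
    fix q assume q: "q \<in> U"
    then have "fst q > 0" by (rule fst_pos)
    then show "a q \<noteq> 0" using c phi_nz q by (simp add: a_def)
  qed
  have Ar: "((\<lambda>t. a (t, snd q)) has_vector_derivative
      of_real (c * fst q powr \<alpha>) * (Pr q * (of_int \<beta> * \<phi> q powi (\<beta> - 1))) +
      of_real (c * (\<alpha> * fst q powr (\<alpha> - 1))) * \<phi> q powi \<beta>) (at (fst q))" if q: "q \<in> U" for q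
  proof -
    have h1: "((\<lambda>x. complex_of_real (c * x powr \<alpha>)) has_vector_derivative of_real (c * (\<alpha> * fst q powr (\<alpha> - 1)))) (at (fst q))"
      by (intro has_vector_derivative_of_real DERIV_cmult has_real_derivative_powr fst_pos q)
    have h2: "((\<lambda>x. \<phi> (x, snd q) powi \<beta>) has_vector_derivative Pr q * (of_int \<beta> * \<phi> q powi (\<beta> - 1))) (at (fst q))"
      using hvd_chain[OF phi_r[OF q] powi_deriv[of "\<phi> (fst q, snd q)" \<beta>]] phi_nz q by simp
    show ?thesis unfolding a_def using has_vector_derivative_mult[OF h1 h2] by simp
  qed
  have Av: "((\<lambda>t. a (fst q, t)) has_vector_derivative
      of_real (c * fst q powr \<alpha>) * (Pv q * (of_int \<beta> * \<phi> q powi (\<beta> - 1)))) (at (snd q))" if q: "q \<in> U" for q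
  proof -
    have h2: "((\<lambda>x. \<phi> (fst q, x) powi \<beta>) has_vector_derivative Pv q * (of_int \<beta> * \<phi> q powi (\<beta> - 1))) (at (snd q))"
      using hvd_chain[OF phi_v[OF q] powi_deriv[of "\<phi> (fst q, snd q)" \<beta>]] phi_nz q by simp
    show ?thesis unfolding a_def using has_vector_derivative_mult_right[OF h2] by simp
  qed
  show "\<forall>q\<in>U. (\<lambda>t. a (t, snd q)) differentiable (at (fst q)) \<and> (\<lambda>t. a (fst q, t)) differentiable (at (snd q))"
    using Ar Av by (blast intro: differentiableI_vector)
  show "\<forall>q\<in>U. Rn a q = of_real \<alpha> + of_int \<beta> * ((of_real \<sigma> - \<phi> q * \<phi> q) / (\<phi> q * \<phi> q + of_real \<sigma>))"
  proof
    fix q assume q: "q \<in> U"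
    have t: "fst q > 0" using fst_pos q .
    have f: "\<phi> q \<noteq> 0" using phi_nz q by simp
    have sq: "\<phi> q * \<phi> q + of_real \<sigma> \<noteq> 0" using phi_sq q by (simp add: power2_eq_square)
    show "Rn a q = of_real \<alpha> + of_int \<beta> * ((of_real \<sigma> - \<phi> q * \<phi> q) / (\<phi> q * \<phi> q + of_real \<sigma>))"
    proof -
      have tz: "complex_of_real (fst q) \<noteq> 0" using t by simp
      have pw: "fst q powr (\<alpha> - 1) = fst q powr \<alpha> / fst q" using t by (simp add: powr_diff)
      have "pd_rho a q = a q * (of_real \<alpha> / of_real (fst q) + of_int \<beta> * Pr q / \<phi> q)"
        unfolding pdr_eq[OF Ar[OF q]] pw using f tz by (simp add: a_def power_int_diff field_simps)
      then have "Rn a q = of_real (fst q) * (of_real \<alpha> / of_real (fst q) + of_int \<beta> * Pr q / \<phi> q)"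
        unfolding Rn_def using c t f by (simp add: a_def)
      also have "\<dots> = of_real \<alpha> + of_int \<beta> * (of_real (fst q) * (Pr q / \<phi> q))"
        using tz by (simp add: field_simps)
      also have "\<dots> = of_real \<alpha> + of_int \<beta> * ((of_real \<sigma> - \<phi> q * \<phi> q) / (\<phi> q * \<phi> q + of_real \<sigma>))"
        unfolding Pr_def using alg1[OF tz f sq] by simp
      finally show ?thesis .
    qed
  qed
  show "\<forall>q\<in>U. Vn a q = of_int \<beta> * ((2 * of_real \<sigma> * \<phi> q) / (\<phi> q * \<phi> q + of_real \<sigma>))"
  proof
    fix q assume q: "q \<in> U"
    have t: "fst q > 0" using fst_pos q .
    have f: "\<phi> q \<noteq> 0" using phi_nz q by simp
    have sq: "\<phi> q * \<phi> q + of_real \<sigma> \<noteq> 0" using phi_sq q by (simp add: power2_eq_square)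
    show "Vn a q = of_int \<beta> * ((2 * of_real \<sigma> * \<phi> q) / (\<phi> q * \<phi> q + of_real \<sigma>))"
    proof -
      have tz: "complex_of_real (fst q) \<noteq> 0" using t by simp
      have "pd_v a q = a q * (of_int \<beta> * Pv q / \<phi> q)"
        unfolding pdv_eq[OF Av[OF q]] using f by (simp add: a_def power_int_diff field_simps)
      then have "Vn a q = of_real (fst q) * (of_int \<beta> * Pv q / \<phi> q)"
        unfolding Vn_def using c t f by (simp add: a_def)
      also have "\<dots> = of_int \<beta> * (of_real (fst q) * (Pv q / \<phi> q))"
        by (simp add: field_simps)
      also have "\<dots> = of_int \<beta> * ((2 * of_real \<sigma> * \<phi> q) / (\<phi> q * \<phi> q + of_real \<sigma>))"
        unfolding Pv_def using alg2[OF tz f sq] by simp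
      finally show ?thesis .
    qed
  qed
qed

lemma a_cancel:
  fixes c \<alpha> :: real and \<beta> :: int
  assumes c: "c \<noteq> 0" and p: "p \<in> U"
  defines "a \<equiv> \<lambda>q. complex_of_real (c * fst q powr \<alpha>) * \<phi> q powi \<beta>"
  shows "\<exists>DR DV. ((\<lambda>t. Rn a (t, snd p)) has_vector_derivative DR) (at (fst p)) \<and>
     ((\<lambda>t. Vn a (fst p, t)) has_vector_derivative DV) (at (snd p)) \<and> - (of_real \<sigma> * DR) - DV = 0"
proof -
  let ?s = "complex_of_real \<sigma>" and ?f = "\<phi> p" and ?b = "complex_of_int \<beta>"
  have f: "?f \<noteq> 0" using phi_nz p by simp
  have sq: "?f * ?f + ?s \<noteq> 0" using phi_sq p by (simp add: power2_eq_square)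
  have tz: "complex_of_real (fst p) \<noteq> 0" using fst_pos[OF p] by simp
  have R: "((\<lambda>t. Rn a (t, snd p)) has_vector_derivative Pr p * (?b * (- (4 * ?s * ?f)) / ((?f*?f + ?s)*(?f*?f+?s)))) (at (fst p))"
    apply (rule transfer_r[OF U_open p, of "\<lambda>q. of_real \<alpha> + ?b * ((?s - \<phi> q * \<phi> q) / (\<phi> q * \<phi> q + ?s))"])
    using a_part(3)[OF c] apply (simp add: a_def)
    using hvd_chain[OF phi_r[OF p] g_deriv[of "\<phi> (fst p, snd p)" ?s "of_real \<alpha>" ?b]] sq by simp
  have V: "((\<lambda>t. Vn a (fst p, t)) has_vector_derivative Pv p * (?b * (2 * ?s * (?s - ?f*?f)) / ((?f*?f + ?s)*(?f*?f+?s)))) (at (snd p))"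
    apply (rule transfer_v[OF U_open p, of "\<lambda>q. ?b * ((2 * ?s * \<phi> q) / (\<phi> q * \<phi> q + ?s))"])
    using a_part(4)[OF c] apply (simp add: a_def)
    using hvd_chain[OF phi_v[OF p] h_deriv[of "\<phi> (fst p, snd p)" ?s ?b]] sq by simp
  have "- (?s * (Pr p * (?b * (- (4 * ?s * ?f)) / ((?f*?f + ?s)*(?f*?f+?s)))))
        - Pv p * (?b * (2 * ?s * (?s - ?f*?f)) / ((?f*?f + ?s)*(?f*?f+?s))) = 0"
    unfolding Pr_def Pv_def using f sq tz
    by (simp add: field_simps power2_eq_square)
  then show ?thesis using R V by blast
qed

end



lemma Rn_mult:
  assumes "(\<lambda>t. n1 (t, snd q)) differentiable (at (fst q))" "(\<lambda>t. n2 (t, snd q)) differentiable (at (fst q))"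
    "n1 q \<noteq> 0" "n2 q \<noteq> 0"
  shows "Rn (\<lambda>q. n1 q * n2 q) q = Rn n1 q + Rn n2 q"
proof -
  have "pd_rho (\<lambda>q. n1 q * n2 q) q = n1 q * pd_rho n2 q + pd_rho n1 q * n2 q"
    using pdr_eq[OF has_vector_derivative_mult[OF pdr_works[OF assms(1)] pdr_works[OF assms(2)]]] by simp
  then show ?thesis unfolding Rn_def using assms(3,4) by (simp add: field_simps)
qed

lemma Vn_mult:
  assumes "(\<lambda>t. n1 (fst q, t)) differentiable (at (snd q))" "(\<lambda>t. n2 (fst q, t)) differentiable (at (snd q))"
    "n1 q \<noteq> 0" "n2 q \<noteq> 0"
  shows "Vn (\<lambda>q. n1 q * n2 q) q = Vn n1 q + Vn n2 q"
proof -
  have "pd_v (\<lambda>q. n1 q * n2 q) q = n1 q * pd_v n2 q + pd_v n1 q * n2 q"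
    using pdv_eq[OF has_vector_derivative_mult[OF pdv_works[OF assms(1)] pdv_works[OF assms(2)]]] by simp
  then show ?thesis unfolding Vn_def using assms(3,4) by (simp add: field_simps)
qed

lemma hvd_quot_ex:
  fixes f g :: "real \<Rightarrow> complex"
  assumes "(f has_vector_derivative f') (at x)" "(g has_vector_derivative g') (at x)" "g x \<noteq> 0"
  shows "\<exists>D. ((\<lambda>t. complex_of_real t * (f t / g t)) has_vector_derivative D) (at x)"
proof -
  have i: "((\<lambda>t. inverse (g t)) has_vector_derivative g' * (- (inverse (g x) ^ Suc (Suc 0)))) (at x)"
    by (rule hvd_chain[OF assms(2) DERIV_inverse[OF assms(3)]])
  have hx: "((\<lambda>x. complex_of_real x) has_vector_derivative 1) (at x)"
    using has_vector_derivative_of_real[OF DERIV_ident] by simp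
  show ?thesis
    using has_vector_derivative_mult[OF hx has_vector_derivative_mult[OF assms(1) i]]
    by (auto simp: divide_inverse)
qed




lemma hvd_quot_ex2:
  fixes f g :: "real \<Rightarrow> complex"
  assumes "(f has_vector_derivative f') (at x)" "(g has_vector_derivative g') (at x)" "g x \<noteq> 0"
  shows "\<exists>D. ((\<lambda>t. c * (f t / g t)) has_vector_derivative D) (at x)"
proof -
  have i: "((\<lambda>t. inverse (g t)) has_vector_derivative g' * (- (inverse (g x) ^ Suc (Suc 0)))) (at x)"
    by (rule hvd_chain[OF assms(2) DERIV_inverse[OF assms(3)]])
  show ?thesis
    using has_vector_derivative_mult_right[OF has_vector_derivative_mult[OF assms(1) i], of c]
    by (auto simp: divide_inverse)
qed

lemma diff_mult_lines:
  fixes f g :: "real \<times> real \<Rightarrow> complex"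
  assumes "(\<lambda>t. f (t, snd q)) differentiable (at (fst q)) \<and> (\<lambda>t. f (fst q, t)) differentiable (at (snd q))"
    "(\<lambda>t. g (t, snd q)) differentiable (at (fst q)) \<and> (\<lambda>t. g (fst q, t)) differentiable (at (snd q))"
  shows "(\<lambda>t. f (t, snd q) * g (t, snd q)) differentiable (at (fst q)) \<and> (\<lambda>t. f (fst q, t) * g (fst q, t)) differentiable (at (snd q))"
proof -
  have a: "(\<lambda>t. f (t, snd q)) differentiable (at (fst q))" "(\<lambda>t. f (fst q, t)) differentiable (at (snd q))"
    "(\<lambda>t. g (t, snd q)) differentiable (at (fst q))" "(\<lambda>t. g (fst q, t)) differentiable (at (snd q))"
    using assms by auto
  show ?thesis
    using differentiableI_vector[OF has_vector_derivative_mult[OF pdr_works[OF a(1)] pdr_works[OF a(3)]]]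
      differentiableI_vector[OF has_vector_derivative_mult[OF pdv_works[OF a(2)] pdv_works[OF a(4)]]]
    by simp
qed

theorem mainTheorem10:
  fixes \<sigma> :: real and U :: "(real \<times> real) set"
    and Mc :: "real \<times> real \<Rightarrow> complex^2^2"
    and \<phi> :: "real \<times> real \<Rightarrow> complex" and \<omega> :: complex
  assumes sigma: "\<sigma> \<in> {1, -1}"
    and U_open: "open U" and U_sub: "U \<subseteq> weyl_half_plane"
    and Mc_diag: "\<forall>p\<in>U. \<forall>i j. i \<noteq> j \<longrightarrow> Mc p $ i $ j = 0"
    and Mc_inv: "\<forall>p\<in>U. invertible (Mc p)"
    and Mc_C2: "Ck_on 2 U Mc"
    and Mc_eq: "weyl_eq \<sigma> U Mc"
    and phi_smooth: "smooth_on U \<phi>"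
    and phi_form: "\<forall>p\<in>U. (complex_of_real (fst p) * \<phi> p + complex_of_real \<sigma> * (\<omega> - complex_of_real (snd p)))\<^sup>2
                          = (\<omega> - complex_of_real (snd p))\<^sup>2 + complex_of_real \<sigma> * (complex_of_real (fst p))\<^sup>2"
    and phi_nz: "\<forall>p\<in>U. \<phi> p \<noteq> 0"
    and phi_sq: "\<forall>p\<in>U. (\<phi> p)\<^sup>2 + complex_of_real \<sigma> \<noteq> 0"
  shows "\<forall>(\<alpha>::real) (\<beta>::int) (K::real). K \<noteq> 0 \<longrightarrow>
           weyl_eq \<sigma> U (\<lambda>p. Mc p ** diag2
              (complex_of_real (K * fst p powr \<alpha>) * \<phi> p powi \<beta>)
              (complex_of_real (inverse K * fst p powr (- \<alpha>)) * \<phi> p powi (- \<beta>)))"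
proof (intro allI impI)
  fix \<alpha> :: real and \<beta> :: int and K :: real
  assume K: "K \<noteq> 0"
  have phi1: "Ck_on (Suc 0) U \<phi>" using phi_smooth unfolding smooth_on_def by blast
  then have dphi: "\<forall>p\<in>U. (\<lambda>t. \<phi> (t, snd p)) differentiable (at (fst p))"
      "\<forall>p\<in>U. (\<lambda>t. \<phi> (fst p, t)) differentiable (at (snd p))" by auto
  interpret phiU \<sigma> U \<phi> \<omega>
    by unfold_locales (use sigma U_open U_sub phi_form phi_nz phi_sq dphi in auto)
  have C2: "\<forall>p\<in>U. (\<lambda>t. Mc (t, snd p)) differentiable (at (fst p)) \<and> (\<lambda>t. Mc (fst p, t)) differentiable (at (snd p))"
     "\<forall>p\<in>U. (\<lambda>t. pd_rho Mc (t, snd p)) differentiable (at (fst p))"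
     "\<forall>p\<in>U. (\<lambda>t. pd_v Mc (fst p, t)) differentiable (at (snd p))"
    using Mc_C2 by (auto simp: numeral_2_eq_2)
  define m1 where "m1 q = Mc q $ 1 $ 1" for q
  define m2 where "m2 q = Mc q $ 2 $ 2" for q
  have Mcd: "\<forall>q\<in>U. Mc q = diag2 (m1 q) (m2 q)"
    using Mc_diag by (auto simp: vec_eq_iff diag2_def forall_2 m1_def m2_def)
  have mnz: "\<forall>q\<in>U. m1 q \<noteq> 0 \<and> m2 q \<noteq> 0"
  proof
    fix q assume q: "q \<in> U"
    obtain A where A: "Mc q ** A = mat 1" using Mc_inv q unfolding invertible_def by blast
    have "(Mc q ** A) $ 1 $ 1 = 1" "(Mc q ** A) $ 2 $ 2 = 1" using A by (simp_all add: mat_def)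
    then show "m1 q \<noteq> 0 \<and> m2 q \<noteq> 0" using Mcd q
      by (auto simp: matrix_matrix_mult_def sum_2 diag2_def)
  qed
  have Mr: "((\<lambda>t. Mc (t, snd q)) has_vector_derivative pd_rho Mc q) (at (fst q))" if "q \<in> U" for q
    using C2(1) that by (auto intro: pdr_works)
  have Mv: "((\<lambda>t. Mc (fst q, t)) has_vector_derivative pd_v Mc q) (at (snd q))" if "q \<in> U" for q
    using C2(1) that by (auto intro: pdv_works)
  have md: "\<forall>q\<in>U. ((\<lambda>t. m (t, snd q)) differentiable (at (fst q))) \<and> ((\<lambda>t. m (fst q, t)) differentiable (at (snd q)))"
    if "m = m1 \<or> m = m2" for m
    using that differentiableI_vector[OF hvd_entry[OF Mr]] differentiableI_vector[OF hvd_entry[OF Mv]]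
    unfolding m1_def m2_def by blast
  have mpr: "pd_rho (\<lambda>q. Mc q $ i $ i) q = pd_rho Mc q $ i $ i" if "q \<in> U" for q i
    by (rule pdr_eq[OF hvd_entry[OF Mr[OF that]]])
  have mpv: "pd_v (\<lambda>q. Mc q $ i $ i) q = pd_v Mc q $ i $ i" if "q \<in> U" for q i
    by (rule pdv_eq[OF hvd_entry[OF Mv[OF that]]])
  have mR: "\<exists>D. ((\<lambda>t. Rn (\<lambda>q. Mc q $ i $ i) (t, snd p)) has_vector_derivative D) (at (fst p))"
    if p: "p \<in> U" and i: "Mc p $ i $ i \<noteq> 0" for p i
  proof -
    obtain D where D: "((\<lambda>t. complex_of_real t * (pd_rho Mc (t, snd p) $ i $ i / Mc (t, snd p) $ i $ i)) has_vector_derivative D) (at (fst p))"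
      using hvd_quot_ex[OF hvd_entry[OF pdr_works] hvd_entry[OF Mr[OF p]]] C2(2) p i by fastforce
    show ?thesis
      apply (rule exI, rule transfer_r[OF U_open p, of "\<lambda>q. of_real (fst q) * (pd_rho Mc q $ i $ i / Mc q $ i $ i)"])
      using mpr apply (simp add: Rn_def)
      using D by simp
  qed
  have mV: "\<exists>D. ((\<lambda>t. Vn (\<lambda>q. Mc q $ i $ i) (fst p, t)) has_vector_derivative D) (at (snd p))"
    if p: "p \<in> U" and i: "Mc p $ i $ i \<noteq> 0" for p i
  proof -
    obtain D where D: "((\<lambda>t. complex_of_real (fst p) * (pd_v Mc (fst p, t) $ i $ i / Mc (fst p, t) $ i $ i)) has_vector_derivative D) (at (snd p))"
      using hvd_quot_ex2[OF hvd_entry[OF pdv_works] hvd_entry[OF Mv[OF p]]] C2(3) p i by fastforce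
    show ?thesis
      apply (rule exI, rule transfer_v[OF U_open p, of "\<lambda>q. of_real (fst q) * (pd_v Mc q $ i $ i / Mc q $ i $ i)"])
      using mpv apply (simp add: Vn_def)
      using D by simp
  qed
  show "weyl_eq \<sigma> U (\<lambda>p. Mc p ** diag2
              (complex_of_real (K * fst p powr \<alpha>) * \<phi> p powi \<beta>)
              (complex_of_real (inverse K * fst p powr (- \<alpha>)) * \<phi> p powi (- \<beta>)))"
    unfolding weyl_eq_def
  proof
    fix p assume p: "p \<in> U"
    define a where "a = (\<lambda>q. complex_of_real (K * fst q powr \<alpha>) * \<phi> q powi \<beta>)"
    define b where "b = (\<lambda>q. complex_of_real (inverse K * fst q powr (- \<alpha>)) * \<phi> q powi (- \<beta>))"
    have Ki: "inverse K \<noteq> 0" using K by simp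
    have m1e: "m1 = (\<lambda>q. Mc q $ 1 $ 1)" and m2e: "m2 = (\<lambda>q. Mc q $ 2 $ 2)"
      by (simp_all add: fun_eq_iff m1_def m2_def)
    have m1p: "Mc p $ 1 $ 1 \<noteq> 0" and m2p: "Mc p $ 2 $ 2 \<noteq> 0" using mnz p m1_def m2_def by auto
    obtain DR1 where DR1: "((\<lambda>t. Rn m1 (t, snd p)) has_vector_derivative DR1) (at (fst p))"
      using mR[OF p m1p] m1e by auto
    obtain DR2 where DR2: "((\<lambda>t. Rn m2 (t, snd p)) has_vector_derivative DR2) (at (fst p))"
      using mR[OF p m2p] m2e by auto
    obtain DV1 where DV1: "((\<lambda>t. Vn m1 (fst p, t)) has_vector_derivative DV1) (at (snd p))"
      using mV[OF p m1p] m1e by auto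
    obtain DV2 where DV2: "((\<lambda>t. Vn m2 (fst p, t)) has_vector_derivative DV2) (at (snd p))"
      using mV[OF p m2p] m2e by auto
    have "ext_d (scale_form fst (hodge \<sigma> (log_diff Mc))) p = 0" using Mc_eq p unfolding weyl_eq_def by blast
    moreover have "ext_d (scale_form fst (hodge \<sigma> (log_diff Mc))) p =
        diag2 (- (of_real \<sigma> * DR1) - DV1) (- (of_real \<sigma> * DR2) - DV2)"
      by (rule diag_weyl[OF U_open p Mcd mnz md md DR1 DR2 DV1 DV2]) auto
    ultimately have Z1: "- (of_real \<sigma> * DR1) - DV1 = 0" and Z2: "- (of_real \<sigma> * DR2) - DV2 = 0"
      by (simp_all add: diag2_zero_iff)
    obtain DRa DVa where Ra: "((\<lambda>t. Rn a (t, snd p)) has_vector_derivative DRa) (at (fst p))"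
      and Va: "((\<lambda>t. Vn a (fst p, t)) has_vector_derivative DVa) (at (snd p))"
      and Za: "- (of_real \<sigma> * DRa) - DVa = 0"
      using a_cancel[OF K p, of \<alpha> \<beta>] unfolding a_def by blast
    obtain DRb DVb where Rb: "((\<lambda>t. Rn b (t, snd p)) has_vector_derivative DRb) (at (fst p))"
      and Vb: "((\<lambda>t. Vn b (fst p, t)) has_vector_derivative DVb) (at (snd p))"
      and Zb: "- (of_real \<sigma> * DRb) - DVb = 0"
      using a_cancel[OF Ki p, of "- \<alpha>" "- \<beta>"] unfolding b_def by blast
    have anz: "\<forall>q\<in>U. a q \<noteq> 0" using a_part(1)[OF K, of \<alpha> \<beta>] unfolding a_def by blast
    have bnz: "\<forall>q\<in>U. b q \<noteq> 0" using a_part(1)[OF Ki, of "- \<alpha>" "- \<beta>"] unfolding b_def by blast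
    have ad: "\<forall>q\<in>U. (\<lambda>t. a (t, snd q)) differentiable (at (fst q)) \<and> (\<lambda>t. a (fst q, t)) differentiable (at (snd q))"
      using a_part(2)[OF K, of \<alpha> \<beta>] unfolding a_def by blast
    have bd: "\<forall>q\<in>U. (\<lambda>t. b (t, snd q)) differentiable (at (fst q)) \<and> (\<lambda>t. b (fst q, t)) differentiable (at (snd q))"
      using a_part(2)[OF Ki, of "- \<alpha>" "- \<beta>"] unfolding b_def by blast
    have md1: "\<forall>q\<in>U. ((\<lambda>t. m1 (t, snd q)) differentiable (at (fst q))) \<and> ((\<lambda>t. m1 (fst q, t)) differentiable (at (snd q)))"
      using md by blast
    have md2: "\<forall>q\<in>U. ((\<lambda>t. m2 (t, snd q)) differentiable (at (fst q))) \<and> ((\<lambda>t. m2 (fst q, t)) differentiable (at (snd q)))"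
      using md by blast
    have R1: "((\<lambda>t. Rn (\<lambda>q. m1 q * a q) (t, snd p)) has_vector_derivative DR1 + DRa) (at (fst p))"
      apply (rule transfer_r[OF U_open p, of "\<lambda>q. Rn m1 q + Rn a q"])
      apply (intro ballI)
      subgoal for q using Rn_mult[of m1 q a] md1[rule_format, of q] ad[rule_format, of q] mnz[rule_format, of q] anz[rule_format, of q] by auto
      by (intro has_vector_derivative_add DR1 Ra)
    have R2: "((\<lambda>t. Rn (\<lambda>q. m2 q * b q) (t, snd p)) has_vector_derivative DR2 + DRb) (at (fst p))"
      apply (rule transfer_r[OF U_open p, of "\<lambda>q. Rn m2 q + Rn b q"])
      apply (intro ballI)
      subgoal for q using Rn_mult[of m2 q b] md2[rule_format, of q] bd[rule_format, of q] mnz[rule_format, of q] bnz[rule_format, of q] by auto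
      by (intro has_vector_derivative_add DR2 Rb)
    have V1: "((\<lambda>t. Vn (\<lambda>q. m1 q * a q) (fst p, t)) has_vector_derivative DV1 + DVa) (at (snd p))"
      apply (rule transfer_v[OF U_open p, of "\<lambda>q. Vn m1 q + Vn a q"])
      apply (intro ballI)
      subgoal for q using Vn_mult[of m1 q a] md1[rule_format, of q] ad[rule_format, of q] mnz[rule_format, of q] anz[rule_format, of q] by auto
      by (intro has_vector_derivative_add DV1 Va)
    have V2: "((\<lambda>t. Vn (\<lambda>q. m2 q * b q) (fst p, t)) has_vector_derivative DV2 + DVb) (at (snd p))"
      apply (rule transfer_v[OF U_open p, of "\<lambda>q. Vn m2 q + Vn b q"])
      apply (intro ballI)
      subgoal for q using Vn_mult[of m2 q b] md2[rule_format, of q] bd[rule_format, of q] mnz[rule_format, of q] bnz[rule_format, of q] by auto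
      by (intro has_vector_derivative_add DV2 Vb)
    have Md: "\<forall>q\<in>U. Mc q ** diag2 (a q) (b q) = diag2 (m1 q * a q) (m2 q * b q)"
      using Mcd by (simp add: diag2_mult)
    have nz': "\<forall>q\<in>U. m1 q * a q \<noteq> 0 \<and> m2 q * b q \<noteq> 0" using mnz anz bnz by simp
    have d1': "\<forall>q\<in>U. (\<lambda>t. m1 (t, snd q) * a (t, snd q)) differentiable (at (fst q)) \<and> (\<lambda>t. m1 (fst q, t) * a (fst q, t)) differentiable (at (snd q))"
      using diff_mult_lines[of m1 _ a] md1 ad by simp
    have d2': "\<forall>q\<in>U. (\<lambda>t. m2 (t, snd q) * b (t, snd q)) differentiable (at (fst q)) \<and> (\<lambda>t. m2 (fst q, t) * b (fst q, t)) differentiable (at (snd q))"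
      using diff_mult_lines[of m2 _ b] md2 bd by simp
    have "ext_d (scale_form fst (hodge \<sigma> (log_diff (\<lambda>q. Mc q ** diag2 (a q) (b q))))) p =
        diag2 (- (of_real \<sigma> * (DR1 + DRa)) - (DV1 + DVa)) (- (of_real \<sigma> * (DR2 + DRb)) - (DV2 + DVb))"
      by (rule diag_weyl[OF U_open p Md nz' _ _ R1 R2 V1 V2]) (use d1' d2' in auto)
    also have "\<dots> = 0" using Z1 Z2 Za Zb by (simp add: diag2_zero_iff algebra_simps)
    finally show "ext_d (scale_form fst (hodge \<sigma> (log_diff (\<lambda>p. Mc p ** diag2
              (complex_of_real (K * fst p powr \<alpha>) * \<phi> p powi \<beta>)
              (complex_of_real (inverse K * fst p powr (- \<alpha>)) * \<phi> p powi (- \<beta>)))))) p = 0"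
      unfolding a_def b_def .
  qed
qed



end
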